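(* Let $N\ge1$, $p\ge2$, $w,g\in L^1_{loc}(\mathbb{R}^N)$ positive a.e. Let $M$ be a constant with $M>0$ if $p=2$ and $0<M<\frac{4}{(p-1)^2}$ if $p>2$. Let $u\in C^1(\mathbb{R}^N)$ with $0<u\le M$ in $\mathbb{R}^N$ be a stable weak solution of $\operatorname{div}(w|\nabla u|^{p-2}\nabla u)=g(x)e^{1/u}$ in $\mathbb{R}^N$. Then for every $\beta\in(0,t_p)$ there is a constant $c>0$ (independent of $\psi$) such that for every nonnegative $\psi\in C^1_c(\mathbb{R}^N)$, $$\int_{\mathbb{R}^N} g\,u^{-2\beta-p}\psi^p\,dx\le c\int_{\mathbb{R}^N} w\,u^{-2\beta}|\nabla\psi|^p\,dx.$$
   Context: Weak solution and stability are with respect to $f(t)=-e^{1/t}$ and the equation $-\operatorname{div}(w|\nabla u|^{p-2}\nabla u)=gf(u)$: $u\in C^1$ is a weak solution if $\int w|\nabla u|^{p-2}\nabla u\cdot\nabla\varphi=\int gf(u)\varphi$ for all $\varphi\in C^1_c(\mathbb{R}^N)$; it is stable if for all $\varphi\in C^1_c(\mathbb{R}^N)$, $\int w|\nabla u|^{p-2}|\nabla\varphi|^2+(p-2)\int w|\nabla u|^{p-4}(\nabla u\cdot\nabla\varphi)^2-\int gf'(u)\varphi^2\ge0$ (middle integrand $=0$ where $\nabla u=0$). $t_p=\frac1M+\sqrt{\frac1M+\frac1{M^2}}$ if $p=2$, and $t_p=\frac{2}{M(p-1)}-\frac{p-1}{2}$ if $p>2$. *)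

theory Defs
  imports "HOL-Analysis.Analysis"
begin

text \<open>Power with the convention t^0 = 1 also at t = 0 (Isabelle's powr has 0 powr 0 = 0).\<close>
definition pw :: "real \<Rightarrow> real \<Rightarrow> real" where
  "pw t a = (if a = 0 then 1 else t powr a)"

definition C1_grad :: "(real^'n \<Rightarrow> real) \<Rightarrow> (real^'n \<Rightarrow> real^'n) \<Rightarrow> bool" where
  "C1_grad u Du \<longleftrightarrow> (\<forall>x. (u has_derivative (\<lambda>h. Du x \<bullet> h)) (at x)) \<and> continuous_on UNIV Du"

definition C1c_grad :: "(real^'n \<Rightarrow> real) \<Rightarrow> (real^'n \<Rightarrow> real^'n) \<Rightarrow> bool" where
  "C1c_grad phi Dphi \<longleftrightarrow> C1_grad phi Dphi \<and> compact (closure {x. phi x \<noteq> 0})"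

definition loc_integrable :: "(real^'n \<Rightarrow> real) \<Rightarrow> bool" where
  "loc_integrable w \<longleftrightarrow> (\<forall>K. compact K \<longrightarrow> set_integrable lebesgue K w)"

definition fE :: "real \<Rightarrow> real" where "fE t = - exp (1 / t)"
definition fE' :: "real \<Rightarrow> real" where "fE' t = exp (1 / t) / t\<^sup>2"

definition weak_solution ::
  "real \<Rightarrow> (real^'n \<Rightarrow> real) \<Rightarrow> (real^'n \<Rightarrow> real) \<Rightarrow> (real^'n \<Rightarrow> real) \<Rightarrow> (real^'n \<Rightarrow> real^'n) \<Rightarrow> bool" where
  "weak_solution p w g u Du \<longleftrightarrow>
     (\<forall>phi Dphi. C1c_grad phi Dphi \<longrightarrow>
        (\<integral>x. w x * pw (norm (Du x)) (p - 2) * (Du x \<bullet> Dphi x) \<partial>lebesgue)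
        = (\<integral>x. g x * fE (u x) * phi x \<partial>lebesgue))"

definition stable ::
  "real \<Rightarrow> (real^'n \<Rightarrow> real) \<Rightarrow> (real^'n \<Rightarrow> real) \<Rightarrow> (real^'n \<Rightarrow> real) \<Rightarrow> (real^'n \<Rightarrow> real^'n) \<Rightarrow> bool" where
  "stable p w g u Du \<longleftrightarrow>
     (\<forall>phi Dphi. C1c_grad phi Dphi \<longrightarrow>
        (\<integral>x. w x * pw (norm (Du x)) (p - 2) * (norm (Dphi x))\<^sup>2 \<partial>lebesgue)
        + (p - 2) * (\<integral>x. (if Du x = 0 then 0
                            else w x * norm (Du x) powr (p - 4) * (Du x \<bullet> Dphi x)\<^sup>2) \<partial>lebesgue)
        - (\<integral>x. g x * fE' (u x) * (phi x)\<^sup>2 \<partial>lebesgue) \<ge> 0)"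

definition t_p :: "real \<Rightarrow> real \<Rightarrow> real" where
  "t_p M p = (if p = 2 then 1 / M + sqrt (1 / M + 1 / M\<^sup>2)
              else 2 / (M * (p - 1)) - (p - 1) / 2)"

end

theory Submission
  imports Defs
begin


lemma zero_deriv_cmp:
  fixes f g :: "'a::real_normed_vector \<Rightarrow> real"
  assumes g: "(g has_derivative (\<lambda>h. 0)) (at x)" and "g x = 0" "f x = 0"
    and ev: "eventually (\<lambda>y. \<bar>f y\<bar> \<le> g y) (at x)"
  shows "(f has_derivative (\<lambda>h. 0)) (at x)"
proof -
  have "((\<lambda>y. ((g y - g x) - 0) /\<^sub>R norm (y - x)) \<longlongrightarrow> 0) (at x)"
    using g by (simp add: has_derivative_at_within[where s=UNIV])
  hence G: "((\<lambda>y. g y / norm (y - x)) \<longlongrightarrow> 0) (at x)" using assms(2) by (simp add: divide_inverse_commute)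
  have "((\<lambda>y. ((f y - f x) - 0) /\<^sub>R norm (y - x)) \<longlongrightarrow> 0) (at x)"
  proof (rule Lim_null_comparison[OF _ G])
    show "\<forall>\<^sub>F y in at x. norm (((f y - f x) - 0) /\<^sub>R norm (y - x)) \<le> g y / norm (y - x)"
      using ev by eventually_elim (simp add: assms(3) abs_mult divide_inverse_commute[symmetric] divide_right_mono)
  qed
  thus ?thesis by (simp add: has_derivative_at_within[where s=UNIV])
qed

lemma grad_zero_at_min:
  assumes "C1_grad \<psi> D\<psi>" "\<forall>x. \<psi> x \<ge> 0" "\<psi> x = 0"
  shows "D\<psi> x = 0"
proof -
  have d: "(\<psi> has_derivative (\<lambda>h. D\<psi> x \<bullet> h)) (at x)" using assms(1) by (simp add: C1_grad_def)
  have "(\<lambda>h. D\<psi> x \<bullet> h) = (\<lambda>h. 0)"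
    by (rule has_derivative_local_min[OF d]) (use assms in auto)
  hence "D\<psi> x \<bullet> D\<psi> x = 0" by metis
  thus ?thesis by simp
qed

lemma C1_cont: "C1_grad u Du \<Longrightarrow> continuous_on UNIV u"
  unfolding C1_grad_def by (meson has_derivative_at_withinI has_derivative_continuous_on)

lemma C1_powr_pos:
  assumes "C1_grad u Du" "\<forall>x. u x > 0"
  shows "C1_grad (\<lambda>x. u x powr a) (\<lambda>x. (a * u x powr (a - 1)) *\<^sub>R Du x)"
  unfolding C1_grad_def
proof (intro conjI allI)
  fix x
  have d: "(u has_derivative (\<lambda>h. Du x \<bullet> h)) (at x)" using assms(1) by (simp add: C1_grad_def)
  have "((\<lambda>x. u x powr (\<lambda>_. a) x) has_derivative (\<lambda>h. (u x powr a) * (0 * ln (u x) + (Du x \<bullet> h) * a / u x))) (at x)"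
    by (rule has_derivative_powr[OF d has_derivative_const]) (use assms in auto)
  moreover have "(\<lambda>h. (u x powr a) * (0 * ln (u x) + (Du x \<bullet> h) * a / u x)) = (\<lambda>h. ((a * u x powr (a - 1)) *\<^sub>R Du x) \<bullet> h)"
    using assms(2)[rule_format, of x] by (auto simp: powr_diff field_simps)
  ultimately show "((\<lambda>x. u x powr a) has_derivative (\<lambda>h. ((a * u x powr (a - 1)) *\<^sub>R Du x) \<bullet> h)) (at x)"
    by simp
next
  have c: "continuous_on UNIV u" "continuous_on UNIV Du" using assms(1) C1_cont by (auto simp: C1_grad_def)
  show "continuous_on UNIV (\<lambda>x. (a * u x powr (a - 1)) *\<^sub>R Du x)"
    using assms(2) by (intro continuous_intros c) (metis less_irrefl)
qed

lemma C1_mult: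
  assumes "C1_grad f Df" "C1_grad g Dg"
  shows "C1_grad (\<lambda>x. f x * g x) (\<lambda>x. f x *\<^sub>R Dg x + g x *\<^sub>R Df x)"
  unfolding C1_grad_def
proof (intro conjI allI)
  fix x
  have d: "(f has_derivative (\<lambda>h. Df x \<bullet> h)) (at x)" "(g has_derivative (\<lambda>h. Dg x \<bullet> h)) (at x)"
    using assms by (auto simp: C1_grad_def)
  have "((\<lambda>x. f x * g x) has_derivative (\<lambda>h. f x * (Dg x \<bullet> h) + (Df x \<bullet> h) * g x)) (at x)"
    by (rule has_derivative_mult[OF d])
  thus "((\<lambda>x. f x * g x) has_derivative (\<lambda>h. (f x *\<^sub>R Dg x + g x *\<^sub>R Df x) \<bullet> h)) (at x)"
    by (simp add: inner_add_left algebra_simps)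
next
  have c: "continuous_on UNIV f" "continuous_on UNIV Df" "continuous_on UNIV g" "continuous_on UNIV Dg"
    using assms C1_cont by (auto simp: C1_grad_def)
  show "continuous_on UNIV (\<lambda>x. f x *\<^sub>R Dg x + g x *\<^sub>R Df x)"
    by (intro continuous_intros c)
qed

lemma C1_powr_nonneg:
  assumes C: "C1_grad \<psi> D\<psi>" and nn: "\<forall>x. \<psi> x \<ge> 0" and q: "q \<ge> 1"
  shows "C1_grad (\<lambda>x. \<psi> x powr q) (\<lambda>x. (q * pw (\<psi> x) (q - 1)) *\<^sub>R D\<psi> x)"
proof (cases "q = 1")
  case True
  have "(\<lambda>x. \<psi> x powr q) = \<psi>" using nn True by auto
  moreover have "(\<lambda>x. (q * pw (\<psi> x) (q - 1)) *\<^sub>R D\<psi> x) = D\<psi>" using True by (auto simp: pw_def)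
  ultimately show ?thesis using C by simp
next
  case False
  hence q1: "q > 1" using q by simp
  have cp: "continuous_on UNIV \<psi>" "continuous_on UNIV D\<psi>" using C C1_cont by (auto simp: C1_grad_def)
  have pweq: "\<And>x. pw (\<psi> x) (q - 1) = \<psi> x powr (q - 1)" using q1 by (simp add: pw_def)
  show ?thesis
    unfolding C1_grad_def pweq
  proof (intro conjI allI)
    fix x
    have d: "(\<psi> has_derivative (\<lambda>h. D\<psi> x \<bullet> h)) (at x)" using C by (simp add: C1_grad_def)
    show "((\<lambda>x. \<psi> x powr q) has_derivative (\<lambda>h. ((q * \<psi> x powr (q - 1)) *\<^sub>R D\<psi> x) \<bullet> h)) (at x)"
    proof (cases "\<psi> x = 0")
      case True
      have D0: "D\<psi> x = 0" using grad_zero_at_min[OF C nn True] .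
      have d0: "(\<psi> has_derivative (\<lambda>h. 0)) (at x)" using d D0 by simp
      have "(\<psi> \<longlongrightarrow> \<psi> x) (at x)" using cp(1) by (simp add: continuous_on_def)
      hence "eventually (\<lambda>y. \<psi> y < 1) (at x)" using True by (intro order_tendstoD(2)) auto
      hence ev: "eventually (\<lambda>y. \<bar>\<psi> y powr q\<bar> \<le> \<psi> y) (at x)"
      proof eventually_elim
        case (elim y)
        show ?case
        proof (cases "\<psi> y = 0")
          case False
          hence "\<psi> y powr q = \<psi> y * \<psi> y powr (q - 1)" using nn by (simp add: powr_diff)
          moreover have "\<psi> y powr (q - 1) \<le> 1" using elim nn q1 by (intro powr_le1) auto
          ultimately show ?thesis using nn by (simp add: mult_left_le)
        qed simp
      qed
      have "((\<lambda>x. \<psi> x powr q) has_derivative (\<lambda>h. 0)) (at x)"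
        by (rule zero_deriv_cmp[OF d0 True _ ev]) (simp add: True)
      thus ?thesis using D0 by simp
    next
      case False
      hence pos: "\<psi> x > 0" using nn[rule_format, of x] by linarith
      have "((\<lambda>x. \<psi> x powr (\<lambda>_. q) x) has_derivative (\<lambda>h. (\<psi> x powr q) * (0 * ln (\<psi> x) + (D\<psi> x \<bullet> h) * q / \<psi> x))) (at x)"
        by (rule has_derivative_powr[OF d has_derivative_const]) (use pos in auto)
      moreover have "(\<lambda>h. (\<psi> x powr q) * (0 * ln (\<psi> x) + (D\<psi> x \<bullet> h) * q / \<psi> x)) = (\<lambda>h. ((q * \<psi> x powr (q - 1)) *\<^sub>R D\<psi> x) \<bullet> h)"
        using pos by (auto simp: powr_diff field_simps)
      ultimately show ?thesis by simp
    qed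
  next
    show "continuous_on UNIV (\<lambda>x. (q * \<psi> x powr (q - 1)) *\<^sub>R D\<psi> x)"
      using nn q1 by (intro continuous_intros continuous_on_powr' cp) auto
  qed
qed

lemma cont_meas_leb: "continuous_on UNIV (f::real^'n \<Rightarrow> real) \<Longrightarrow> f \<in> borel_measurable lebesgue"
  using continuous_imp_measurable_on_sets_lebesgue[of UNIV f] by simp

lemma integrable_w_cont:
  fixes w f :: "real^'n \<Rightarrow> real"
  assumes w: "loc_integrable w" and f: "continuous_on UNIV f" and K: "compact K"
    and z: "\<And>x. x \<notin> K \<Longrightarrow> f x = 0"
  shows "integrable lebesgue (\<lambda>x. w x * f x)"
proof -
  have wi: "integrable lebesgue (\<lambda>x. indicator K x *\<^sub>R w x)"
    using w K by (simp add: loc_integrable_def set_integrable_def)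
  have "compact (f ` K)" using K f by (meson compact_continuous_image continuous_on_subset subset_UNIV)
  then obtain B where B: "\<And>x. x \<in> K \<Longrightarrow> \<bar>f x\<bar> \<le> B"
    by (metis bounded_iff compact_imp_bounded image_eqI real_norm_def)
  have eq: "(\<lambda>x. w x * f x) = (\<lambda>x. (indicator K x *\<^sub>R w x) * f x)"
    using z by (auto simp: indicator_def fun_eq_iff)
  show ?thesis unfolding eq
  proof (rule Bochner_Integration.integrable_bound[OF integrable_mult_right[OF wi, of B]])
    show "(\<lambda>x. (indicator K x *\<^sub>R w x) * f x) \<in> borel_measurable lebesgue"
      using wi f cont_meas_leb by (intro borel_measurable_times) auto
    show "AE x in lebesgue. norm (indicator K x *\<^sub>R w x * f x) \<le> norm (B * (indicator K x *\<^sub>R w x))"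
    proof (intro AE_I2)
      fix x show "norm (indicator K x *\<^sub>R w x * f x) \<le> norm (B * (indicator K x *\<^sub>R w x))"
      proof (cases "x \<in> K")
        case True
        then show ?thesis using B[OF True] by (simp add: abs_mult mult.commute[of "\<bar>w x\<bar>"] mult_right_mono)
      qed simp
    qed
  qed
qed



lemma young1:
  fixes P Q p \<eta> :: real
  assumes "P \<ge> 0" "Q \<ge> 0" "p \<ge> 2" "\<eta> > 0"
  shows "P powr (p - 1) * Q \<le> \<eta> * P powr p + \<eta> powr (1 - p) * Q powr p"
proof (cases "Q \<le> \<eta> * P")
  case True
  have "P powr (p - 1) * Q \<le> P powr (p - 1) * (\<eta> * P)" using True assms by (intro mult_left_mono) auto
  also have "\<dots> = \<eta> * P powr p"
    using assms by (cases "P = 0") (auto simp: powr_diff)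
  also have "\<dots> \<le> \<eta> * P powr p + \<eta> powr (1 - p) * Q powr p" by simp
  finally show ?thesis .
next
  case False
  hence Pl: "P \<le> Q / \<eta>" using assms by (simp add: field_simps)
  have Qp: "Q > 0" using False assms by (smt (verit) mult_nonneg_nonneg)
  have "P powr (p - 1) * Q \<le> (Q / \<eta>) powr (p - 1) * Q"
    using Pl assms Qp by (intro mult_right_mono powr_mono2) auto
  also have "\<dots> = \<eta> powr (1 - p) * Q powr p"
    using assms Qp by (simp add: powr_divide powr_diff field_simps powr_minus_divide)
  also have "\<dots> \<le> \<eta> * P powr p + \<eta> powr (1 - p) * Q powr p" using assms by simp
  finally show ?thesis .
qed

lemma young2:
  fixes P Q p \<eta> :: real
  assumes "P \<ge> 0" "Q \<ge> 0" "p \<ge> 2" "\<eta> > 0"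
  shows "pw P (p - 2) * Q\<^sup>2 \<le> \<eta>\<^sup>2 * P powr p + \<eta> powr (2 - p) * Q powr p"
proof (cases "Q \<le> \<eta> * P")
  case True
  have "pw P (p - 2) * Q\<^sup>2 \<le> pw P (p - 2) * (\<eta> * P)\<^sup>2" using True assms
    by (intro mult_left_mono power_mono) (auto simp: pw_def)
  also have "\<dots> = \<eta>\<^sup>2 * P powr p"
    using assms by (cases "P = 0"; cases "p = 2") (auto simp: pw_def powr_diff power2_eq_square powr_numeral[symmetric])
  also have "\<dots> \<le> \<eta>\<^sup>2 * P powr p + \<eta> powr (2 - p) * Q powr p" by simp
  finally show ?thesis .
next
  case False
  hence Pl: "P \<le> Q / \<eta>" using assms by (simp add: field_simps)
  have Qp: "Q > 0" using False assms by (smt (verit) mult_nonneg_nonneg)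
  have "pw P (p - 2) * Q\<^sup>2 \<le> pw (Q / \<eta>) (p - 2) * Q\<^sup>2"
    using Pl assms Qp by (intro mult_right_mono) (auto simp: pw_def intro!: powr_mono2)
  also have "\<dots> = \<eta> powr (2 - p) * Q powr p"
    using assms Qp by (cases "p = 2") (auto simp: pw_def powr_divide powr_diff field_simps powr_minus_divide power2_eq_square powr_numeral[symmetric])
  also have "\<dots> \<le> \<eta>\<^sup>2 * P powr p + \<eta> powr (2 - p) * Q powr p" using assms by simp
  finally show ?thesis .
qed



lemma pw_pos: "x > 0 \<Longrightarrow> pw x a = x powr a" by (simp add: pw_def)

lemma sq_powr: "(x::real) > 0 \<Longrightarrow> (x powr a)\<^sup>2 = x powr (2 * a)"
proof -
  assume x: "x > 0"
  have "(x powr a)\<^sup>2 = (x powr a) powr 2" using x by (simp add: powr_numeral)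
  thus ?thesis by (simp add: powr_powr mult.commute)
qed


lemma F1:
  fixes s t U p e :: real
  assumes "s \<ge> 0" "t \<ge> 0" "U > 0" "p \<ge> 2"
  shows "pw s (p - 2) * s\<^sup>2 * U powr e * (t powr (p/2))\<^sup>2 = (s * t * U powr (e / p)) powr p"
proof (cases "s = 0 \<or> t = 0")
  case True thus ?thesis using assms by (auto simp: pw_def)
next
  case False
  hence sp: "s > 0" "t > 0" using assms by auto
  have "(s * t * U powr (e / p)) powr p = s powr p * t powr p * U powr e"
    using sp assms by (simp add: powr_mult powr_powr)
  moreover have "pw s (p - 2) * s\<^sup>2 = s powr p"
  proof -
    have "pw s (p - 2) * s\<^sup>2 = s powr (p - 2) * s powr 2" using sp by (simp add: pw_pos powr_numeral)
    also have "\<dots> = s powr p" by (subst powr_add[symmetric]) simp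
    finally show ?thesis .
  qed
  moreover have "(t powr (p/2))\<^sup>2 = t powr p"
    using sp by (simp add: sq_powr)
  ultimately show ?thesis by simp
qed

lemma F2:
  fixes s t U p e r :: real
  assumes "s \<ge> 0" "t \<ge> 0" "U > 0" "p \<ge> 2" "r \<ge> 0"
  shows "pw s (p - 2) * s * U powr (e + 1) * t powr (p/2) * ((p/2) * pw t (p/2 - 1) * r)
       = (p/2) * ((s * t * U powr (e / p)) powr (p - 1) * (U powr ((e + p) / p) * r))"
proof (cases "s = 0 \<or> t = 0")
  case True thus ?thesis using assms by (auto simp: pw_def)
next
  case False
  hence sp: "s > 0" "t > 0" using assms by auto
  have e1: "(s * t * U powr (e / p)) powr (p - 1) * U powr ((e + p) / p) = s powr (p - 1) * t powr (p - 1) * U powr (e + 1)"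
  proof -
    have "(s * t * U powr (e / p)) powr (p - 1) = s powr (p - 1) * t powr (p - 1) * U powr (e / p * (p - 1))"
      using sp assms by (simp add: powr_mult powr_powr)
    moreover have "U powr (e / p * (p - 1)) * U powr ((e + p) / p) = U powr (e + 1)"
    proof -
      have "e / p * (p - 1) + (e + p) / p = e + 1" using assms by (simp add: field_simps)
      thus ?thesis by (simp add: powr_add[symmetric])
    qed
    ultimately show ?thesis by (simp add: mult.assoc)
  qed
  have e2: "pw s (p - 2) * s = s powr (p - 1)"
  proof -
    have "s powr (p - 1) = s powr ((p - 2) + 1)" by simp
    also have "\<dots> = s powr (p - 2) * s powr 1" by (rule powr_add)
    finally show ?thesis using sp by (simp add: pw_pos)
  qed
  have e3: "t powr (p/2) * pw t (p/2 - 1) = t powr (p - 1)"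
  proof -
    have "t powr (p - 1) = t powr (p/2 + (p/2 - 1))" by simp
    also have "\<dots> = t powr (p/2) * t powr (p/2 - 1)" by (rule powr_add)
    finally show ?thesis using sp by (simp add: pw_pos)
  qed
  note eqs = e1 e2 e3
  have "pw s (p - 2) * s * U powr (e + 1) * t powr (p/2) * ((p/2) * pw t (p/2 - 1) * r)
     = (p/2) * ((pw s (p - 2) * s) * (t powr (p/2) * pw t (p/2 - 1)) * U powr (e + 1) * r)"
    by (simp add: ac_simps)
  also have "\<dots> = (p/2) * (s powr (p - 1) * t powr (p - 1) * U powr (e + 1) * r)"
    using eqs(2,3) by simp
  also have "\<dots> = (p/2) * ((s * t * U powr (e / p)) powr (p - 1) * (U powr ((e + p) / p) * r))"
    using eqs(1) by (simp add: ac_simps)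
  finally show ?thesis .
qed

lemma F3:
  fixes s t U p e r :: real
  assumes "s \<ge> 0" "t \<ge> 0" "U > 0" "p \<ge> 2" "r \<ge> 0"
  shows "pw s (p - 2) * U powr (e + 2) * ((p/2) * pw t (p/2 - 1) * r)\<^sup>2
       = (p/2)\<^sup>2 * (pw (s * t * U powr (e / p)) (p - 2) * (U powr ((e + p) / p) * r)\<^sup>2)"
proof (cases "p = 2")
  case True
  have "(U powr ((e + 2) / 2))\<^sup>2 = U powr (2 * ((e + 2) / 2))"
    using assms by (simp only: sq_powr)
  moreover have "2 * ((e + 2) / 2) = e + 2" by simp
  ultimately have "(U powr ((e + 2) / 2))\<^sup>2 = U powr (e + 2)" by metis
  thus ?thesis using True by (simp add: pw_def power_mult_distrib)
next
  case False
  hence p2: "p > 2" using assms by simp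
  show ?thesis
  proof (cases "s = 0 \<or> t = 0")
    case True thus ?thesis using assms p2 by (auto simp: pw_def)
  next
    case False
    hence sp: "s > 0" "t > 0" using assms by auto
    have e1: "pw (s * t * U powr (e / p)) (p - 2) = s powr (p - 2) * t powr (p - 2) * U powr (e / p * (p - 2))"
      using sp assms by (simp add: pw_pos powr_mult powr_powr)
    have e2: "(U powr ((e + p) / p))\<^sup>2 = U powr (2 * ((e + p) / p))"
      using assms by (simp add: sq_powr)
    have "e / p * (p - 2) + 2 * ((e + p) / p) = e + 2" using p2 by (simp add: field_simps)
    hence e3: "U powr (e / p * (p - 2)) * U powr (2 * ((e + p) / p)) = U powr (e + 2)"
      by (simp add: powr_add[symmetric])
    have e4: "(pw t (p/2 - 1))\<^sup>2 = t powr (p - 2)"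
      using sp by (simp add: pw_pos sq_powr algebra_simps)
    have e5: "pw s (p - 2) = s powr (p - 2)" using sp by (simp add: pw_pos)
    note eqs = e1 e2 e3 e4 e5
    have "pw s (p - 2) * U powr (e + 2) * ((p/2) * pw t (p/2 - 1) * r)\<^sup>2
       = (p/2)\<^sup>2 * (pw s (p - 2) * (pw t (p/2 - 1))\<^sup>2 * U powr (e + 2) * r\<^sup>2)"
      by (simp only: power_mult_distrib mult_ac)
    also have "\<dots> = (p/2)\<^sup>2 * (s powr (p - 2) * t powr (p - 2) * (U powr (e / p * (p - 2)) * U powr (2 * ((e + p) / p))) * r\<^sup>2)"
      using eqs(3,4,5) by simp
    also have "\<dots> = (p/2)\<^sup>2 * (pw (s * t * U powr (e / p)) (p - 2) * (U powr ((e + p) / p) * r)\<^sup>2)"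
      using eqs(1,2) by (simp add: power_mult_distrib ac_simps)
    finally show ?thesis .
  qed
qed

lemma F4:
  fixes U p e r :: real
  assumes "U > 0" "p \<ge> 2" "r \<ge> 0"
  shows "U powr (e + p) * r powr p = (U powr ((e + p) / p) * r) powr p"
  using assms by (simp add: powr_mult powr_powr)



lemma PB1:
  fixes W s t r U p e \<eta> Iv :: real
  assumes "W \<ge> 0" "s \<ge> 0" "t \<ge> 0" "r \<ge> 0" "U > 0" "p \<ge> 2" "\<eta> > 0"
    and I: "\<bar>Iv\<bar> \<le> s * ((p/2) * pw t (p/2 - 1) * r)"
  shows "\<bar>W * (pw s (p - 2) * U powr (e + 1) * t powr (p/2) * Iv)\<bar>
     \<le> (p/2) * (\<eta> * (W * (pw s (p - 2) * s\<^sup>2 * U powr e * (t powr (p/2))\<^sup>2)) + \<eta> powr (1 - p) * (W * (U powr (e + p) * r powr p)))"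
proof -
  define P where "P = s * t * U powr (e / p)"
  define Q where "Q = U powr ((e + p) / p) * r"
  have PQ: "P \<ge> 0" "Q \<ge> 0" using assms by (auto simp: P_def Q_def)
  have pwn: "pw s (p - 2) \<ge> 0" "pw t (p/2 - 1) \<ge> 0" by (auto simp: pw_def)
  have "\<bar>W * (pw s (p - 2) * U powr (e + 1) * t powr (p/2) * Iv)\<bar>
      = W * (pw s (p - 2) * U powr (e + 1) * t powr (p/2) * \<bar>Iv\<bar>)"
    using assms pwn by (simp add: abs_mult)
  also have "\<dots> \<le> W * (pw s (p - 2) * U powr (e + 1) * t powr (p/2) * (s * ((p/2) * pw t (p/2 - 1) * r)))"
    using assms pwn I by (intro mult_left_mono) auto
  also have "\<dots> = W * (pw s (p - 2) * s * U powr (e + 1) * t powr (p/2) * ((p/2) * pw t (p/2 - 1) * r))"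
    by (simp only: mult_ac)
  also have "\<dots> = W * ((p/2) * (P powr (p - 1) * Q))"
    using F2[of s t U p r e] assms by (simp add: P_def Q_def)
  also have "\<dots> \<le> W * ((p/2) * (\<eta> * P powr p + \<eta> powr (1 - p) * Q powr p))"
    using young1[OF PQ \<open>p \<ge> 2\<close> \<open>\<eta> > 0\<close>] assms by (intro mult_left_mono) auto
  also have "\<dots> = (p/2) * (\<eta> * (W * (pw s (p - 2) * s\<^sup>2 * U powr e * (t powr (p/2))\<^sup>2)) + \<eta> powr (1 - p) * (W * (U powr (e + p) * r powr p)))"
    using F1[of s t U p e] F4[of U p r e] assms by (simp add: P_def Q_def algebra_simps)
  finally show ?thesis .
qed

lemma PB2:
  fixes W s t r U p e \<eta> :: real
  assumes "W \<ge> 0" "s \<ge> 0" "t \<ge> 0" "r \<ge> 0" "U > 0" "p \<ge> 2" "\<eta> > 0"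
  shows "W * (pw s (p - 2) * U powr (e + 2) * ((p/2) * pw t (p/2 - 1) * r)\<^sup>2)
     \<le> (p/2)\<^sup>2 * (\<eta>\<^sup>2 * (W * (pw s (p - 2) * s\<^sup>2 * U powr e * (t powr (p/2))\<^sup>2)) + \<eta> powr (2 - p) * (W * (U powr (e + p) * r powr p)))"
proof -
  define P where "P = s * t * U powr (e / p)"
  define Q where "Q = U powr ((e + p) / p) * r"
  have PQ: "P \<ge> 0" "Q \<ge> 0" using assms by (auto simp: P_def Q_def)
  have "W * (pw s (p - 2) * U powr (e + 2) * ((p/2) * pw t (p/2 - 1) * r)\<^sup>2)
      = W * ((p/2)\<^sup>2 * (pw P (p - 2) * Q\<^sup>2))"
    using F3[of s t U p r e] assms by (simp add: P_def Q_def)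
  also have "\<dots> \<le> W * ((p/2)\<^sup>2 * (\<eta>\<^sup>2 * P powr p + \<eta> powr (2 - p) * Q powr p))"
    using young2[OF PQ \<open>p \<ge> 2\<close> \<open>\<eta> > 0\<close>] assms by (intro mult_left_mono) auto
  also have "\<dots> = (p/2)\<^sup>2 * (\<eta>\<^sup>2 * (W * (pw s (p - 2) * s\<^sup>2 * U powr e * (t powr (p/2))\<^sup>2)) + \<eta> powr (2 - p) * (W * (U powr (e + p) * r powr p)))"
    using F1[of s t U p e] F4[of U p r e] assms by (simp add: P_def Q_def algebra_simps)
  finally show ?thesis .
qed



lemma C1c_of:
  assumes "C1_grad f Df" "C1c_grad \<psi> D\<psi>" "\<And>x. \<psi> x = 0 \<Longrightarrow> f x = 0"
  shows "C1c_grad f Df"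
proof -
  have "{x. f x \<noteq> 0} \<subseteq> {x. \<psi> x \<noteq> 0}" using assms(3) by auto
  hence s: "closure {x. f x \<noteq> 0} \<subseteq> closure {x. \<psi> x \<noteq> 0}" by (rule closure_mono)
  have "compact (closure {x. \<psi> x \<noteq> 0})" using assms(2) by (simp add: C1c_grad_def)
  hence "compact (closure {x. \<psi> x \<noteq> 0} \<inter> closure {x. f x \<noteq> 0})" by (intro compact_Int_closed) auto
  moreover have "closure {x. \<psi> x \<noteq> 0} \<inter> closure {x. f x \<noteq> 0} = closure {x. f x \<noteq> 0}" using s by blast
  ultimately have "compact (closure {x. f x \<noteq> 0})" by simp
  thus ?thesis using assms(1) by (simp add: C1c_grad_def)
qed

lemma cont_pw:
  assumes "continuous_on UNIV f" "\<And>x. f x \<ge> 0" "a \<ge> 0"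
  shows "continuous_on UNIV (\<lambda>x. pw (f x) a)"
proof (cases "a = 0")
  case True thus ?thesis by (simp add: pw_def)
next
  case False
  hence "(\<lambda>x. pw (f x) a) = (\<lambda>x. f x powr a)" by (simp add: pw_def)
  moreover have "continuous_on UNIV (\<lambda>x. f x powr a)"
    using assms False by (intro continuous_on_powr' continuous_on_const) auto
  ultimately show ?thesis by metis
qed

lemma norm_comb_sq:
  fixes v z :: "'a::real_inner"
  shows "(norm (a *\<^sub>R v + b *\<^sub>R z))\<^sup>2 = a\<^sup>2 * (norm v)\<^sup>2 + 2 * a * b * (v \<bullet> z) + b\<^sup>2 * (norm z)\<^sup>2"
  unfolding power2_norm_eq_inner by (simp add: inner_add_left inner_add_right inner_commute algebra_simps power2_eq_square)

lemma mid_bound: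
  fixes w :: "real^'n \<Rightarrow> real"
  assumes p: "p \<ge> 2" and wpos: "AE x in lebesgue. w x \<ge> 0"
    and int: "integrable lebesgue (\<lambda>x. w x * pw (norm (Du x)) (p - 2) * (norm (Dphi x))\<^sup>2)"
  shows "(p - 2) * (\<integral>x. (if Du x = 0 then 0 else w x * norm (Du x) powr (p - 4) * (Du x \<bullet> Dphi x)\<^sup>2) \<partial>lebesgue)
       \<le> (p - 2) * (\<integral>x. w x * pw (norm (Du x)) (p - 2) * (norm (Dphi x))\<^sup>2 \<partial>lebesgue)"
proof (cases "p = 2")
  case False
  hence p2: "p > 2" using p by simp
  show ?thesis
  proof (intro mult_left_mono integral_mono_AE'[OF int])
    show "AE x in lebesgue. (if Du x = 0 then 0 else w x * norm (Du x) powr (p - 4) * (Du x \<bullet> Dphi x)\<^sup>2)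
         \<le> w x * pw (norm (Du x)) (p - 2) * (norm (Dphi x))\<^sup>2"
      using wpos
    proof eventually_elim
      case (elim x)
      show ?case
      proof (cases "Du x = 0")
        case False
        hence n: "norm (Du x) > 0" by simp
        have cs: "\<bar>Du x \<bullet> Dphi x\<bar> \<le> norm (Du x) * norm (Dphi x)" by (rule Cauchy_Schwarz_ineq2)
        have "\<bar>Du x \<bullet> Dphi x\<bar>\<^sup>2 \<le> (norm (Du x) * norm (Dphi x))\<^sup>2"
          by (rule power_mono[OF cs]) simp
        hence "(Du x \<bullet> Dphi x)\<^sup>2 \<le> (norm (Du x) * norm (Dphi x))\<^sup>2" by simp
        hence "norm (Du x) powr (p - 4) * (Du x \<bullet> Dphi x)\<^sup>2 \<le> norm (Du x) powr (p - 4) * (norm (Du x) * norm (Dphi x))\<^sup>2"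
          by (intro mult_left_mono) auto
        also have "\<dots> = norm (Du x) powr (p - 4) * (norm (Du x))\<^sup>2 * (norm (Dphi x))\<^sup>2"
          by (simp add: power_mult_distrib)
        also have "norm (Du x) powr (p - 4) * (norm (Du x))\<^sup>2 = norm (Du x) powr (p - 2)"
        proof -
          have "norm (Du x) powr (p - 4) * (norm (Du x))\<^sup>2 = norm (Du x) powr (p - 4) * norm (Du x) powr 2"
            using n by (simp add: powr_numeral)
          also have "\<dots> = norm (Du x) powr (p - 2)" by (subst powr_add[symmetric]) simp
          finally show ?thesis .
        qed
        finally have "norm (Du x) powr (p - 4) * (Du x \<bullet> Dphi x)\<^sup>2 \<le> pw (norm (Du x)) (p - 2) * (norm (Dphi x))\<^sup>2"
          using p2 by (simp add: pw_def)
        thus ?thesis using False elim by (simp add: mult.assoc mult_left_mono)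
      qed (use elim in \<open>auto simp: pw_def\<close>)
    qed
    show "AE x in lebesgue. 0 \<le> w x * pw (norm (Du x)) (p - 2) * (norm (Dphi x))\<^sup>2"
      using wpos by eventually_elim (auto simp: pw_def)
  qed (use p in auto)
qed simp



theorem mainTheorem9:
  fixes p M :: real
    and w g u :: "real^'n \<Rightarrow> real"
    and Du :: "real^'n \<Rightarrow> real^'n"
  assumes hp: "p \<ge> 2"
    and hw: "loc_integrable w" "AE x in lebesgue. w x > 0"
    and hg: "loc_integrable g" "AE x in lebesgue. g x > 0"
    and hM: "M > 0" "p > 2 \<Longrightarrow> M < 4 / (p - 1)\<^sup>2"
    and hu: "C1_grad u Du" "\<forall>x. 0 < u x \<and> u x \<le> M"
    and hsol: "weak_solution p w g u Du"
    and hstab: "stable p w g u Du"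
  shows "\<forall>\<beta>. 0 < \<beta> \<and> \<beta> < t_p M p \<longrightarrow>
           (\<exists>c>0. \<forall>\<psi> D\<psi>. C1c_grad \<psi> D\<psi> \<and> (\<forall>x. \<psi> x \<ge> 0) \<longrightarrow>
              (\<integral>x. g x * u x powr (- 2 * \<beta> - p) * \<psi> x powr p \<partial>lebesgue)
              \<le> c * (\<integral>x. w x * u x powr (- 2 * \<beta>) * norm (D\<psi> x) powr p \<partial>lebesgue))"
proof (intro allI impI)
  fix \<beta> :: real
  assume hb: "0 < \<beta> \<and> \<beta> < t_p M p"
  define q where "q = p / 2"
  define \<gamma> where "\<gamma> = - \<beta> - (p - 2) / 2"
  define e where "e = - 2 * \<beta> - p"
  define m where "m = 2 * \<beta> + p - 1"
  define L where "L = M * (p - 1)"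
  define \<delta> where "\<delta> = m - L * \<gamma>\<^sup>2"
  have qge: "q \<ge> 1" using hp by (simp add: q_def)
  have ge: "\<gamma> + \<gamma> = e + 2" "\<gamma> + (\<gamma> - 1) = e + 1" "(\<gamma> - 1) + (\<gamma> - 1) = e" "e + p = - 2 * \<beta>"
    by (simp_all add: \<gamma>_def e_def)
  have Lnn: "L \<ge> 0" using hM hp by (simp add: L_def)
  have \<delta>pos: "\<delta> > 0"
  proof (cases "p = 2")
    case True
    define a where "a = 1 / M"
    have Ma: "M * a = 1" using hM by (simp add: a_def)
    have apos: "a > 0" using hM by (simp add: a_def)
    have bl: "\<beta> < a + sqrt (a + a\<^sup>2)" using hb True by (simp add: t_p_def a_def power2_eq_square)
    have d: "\<delta> = 2 * \<beta> + 1 - M * \<beta>\<^sup>2" using True by (simp add: \<delta>_def m_def L_def \<gamma>_def)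
    show ?thesis
    proof (cases "\<beta> < a")
      case True
      have "M * \<beta>\<^sup>2 < M * (\<beta> * a)" using True hM hb by (simp add: power2_eq_square)
      also have "\<dots> = \<beta>" using Ma by (simp add: algebra_simps)
      finally show ?thesis using d hb by simp
    next
      case False
      have "(\<beta> - a)\<^sup>2 < (sqrt (a + a\<^sup>2))\<^sup>2" using False bl by (intro power_strict_mono) auto
      hence s: "(\<beta> - a)\<^sup>2 < a + a\<^sup>2" using apos by simp
      have "M * \<beta>\<^sup>2 - 2 * \<beta> - 1 = M * ((\<beta> - a)\<^sup>2 - a - a\<^sup>2)"
        using Ma by (simp add: power2_eq_square algebra_simps)
      moreover have "M * ((\<beta> - a)\<^sup>2 - a - a\<^sup>2) < 0" using s hM by (simp add: mult_pos_neg)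
      ultimately show ?thesis using d by simp
    qed
  next
    case False
    hence p2: "p > 2" using hp by simp
    define s where "s = \<beta> + (p - 1) / 2"
    have Lpos: "L > 0" using hM p2 by (simp add: L_def)
    have bl: "\<beta> < 2 / L - (p - 1) / 2" using hb False by (simp add: t_p_def L_def)
    have "s < 2 / L" using bl by (simp add: s_def)
    hence Ls: "L * s < 2" using Lpos by (simp add: pos_less_divide_eq mult.commute)
    have g: "\<gamma> = - (s - 1/2)" by (simp add: \<gamma>_def s_def field_simps)
    have s12a: "(p - 1)/2 - 1/2 = (p - 2)/2" by (simp add: field_simps)
    have s12b: "(p - 2)/2 > 0" using p2 by simp
    have s12: "0 < s - 1/2" using conjunct1[OF hb] s12a s12b unfolding s_def by linarith
    have "(s - 1/2)\<^sup>2 < s\<^sup>2" using s12 by (intro power_strict_mono) auto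
    hence "L * (s - 1/2)\<^sup>2 \<le> L * s\<^sup>2" using Lpos by simp
    also have "\<dots> = (L * s) * s" by (simp add: power2_eq_square)
    also have "\<dots> < 2 * s" using Ls s12 by (intro mult_strict_right_mono) auto
    finally have "L * (s - 1/2)\<^sup>2 < 2 * s" .
    moreover have "\<gamma>\<^sup>2 = (s - 1/2)\<^sup>2" unfolding g by (rule power2_minus)
    ultimately have "L * \<gamma>\<^sup>2 < 2 * s" by simp
    moreover have "m = 2 * s" by (simp add: m_def s_def)
    ultimately show ?thesis by (simp add: \<delta>_def)
  qed
  define k1 where "k1 = \<bar>2 + 2 * L * \<gamma>\<bar> * q"
  define k2 where "k2 = L * q\<^sup>2"
  have k12: "k1 \<ge> 0" "k2 \<ge> 0" using qge Lnn by (auto simp: k1_def k2_def)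
  define \<eta> where "\<eta> = min 1 (\<delta> / (2 * (k1 + k2 + 1)))"
  have \<eta>pos: "\<eta> > 0" using \<delta>pos k12 by (simp add: \<eta>_def)
  have \<eta>le1: "\<eta> \<le> 1" by (simp add: \<eta>_def)
  have coef: "k1 * \<eta> + k2 * \<eta>\<^sup>2 \<le> \<delta> / 2"
  proof -
    have "\<eta>\<^sup>2 \<le> \<eta>" using \<eta>pos \<eta>le1 by (simp add: power2_eq_square mult_le_cancel_left1)
    hence "k2 * \<eta>\<^sup>2 \<le> k2 * \<eta>" using k12 by (intro mult_left_mono) auto
    hence "k1 * \<eta> + k2 * \<eta>\<^sup>2 \<le> (k1 + k2 + 1) * \<eta>" using k12 \<eta>pos
      by (simp add: algebra_simps)
    also have "\<dots> \<le> (k1 + k2 + 1) * (\<delta> / (2 * (k1 + k2 + 1)))"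
      using k12 by (intro mult_left_mono) (auto simp: \<eta>_def)
    also have "\<dots> = \<delta> / 2" using k12 by (simp add: field_simps)
    finally show ?thesis .
  qed
  define K0 where "K0 = k1 * \<eta> powr (1 - p) + k2 * \<eta> powr (2 - p)"
  define KA where "KA = 2 * K0 / \<delta>"
  define K where "K = (p - 1) * (\<gamma>\<^sup>2 * KA + 2 * \<bar>\<gamma>\<bar> * q * (\<eta> * KA + \<eta> powr (1 - p)) + q\<^sup>2 * (\<eta>\<^sup>2 * KA + \<eta> powr (2 - p)))"
  show "\<exists>c>0. \<forall>\<psi> D\<psi>. C1c_grad \<psi> D\<psi> \<and> (\<forall>x. \<psi> x \<ge> 0) \<longrightarrow>
              (\<integral>x. g x * u x powr (- 2 * \<beta> - p) * \<psi> x powr p \<partial>lebesgue)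
              \<le> c * (\<integral>x. w x * u x powr (- 2 * \<beta>) * norm (D\<psi> x) powr p \<partial>lebesgue)"
  proof (intro exI[of _ "max K 1"] conjI allI impI)
    fix \<psi> :: "real^'n \<Rightarrow> real" and D\<psi> :: "real^'n \<Rightarrow> real^'n" assume H: "C1c_grad \<psi> D\<psi> \<and> (\<forall>x. \<psi> x \<ge> 0)"
    have C\<psi>: "C1_grad \<psi> D\<psi>" using H by (simp add: C1c_grad_def)
    have nn: "\<forall>x. \<psi> x \<ge> 0" using H by simp
    have cK: "compact (closure {x. \<psi> x \<noteq> 0})" using H by (simp add: C1c_grad_def)
    have upos: "\<forall>x. u x > 0" using hu(2) by simp
    have uM: "\<And>x. u x \<le> M" using hu(2) by simp
    have wnn: "AE x in lebesgue. w x \<ge> 0" using hw(2) by eventually_elim simp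
    have gnn: "AE x in lebesgue. g x \<ge> 0" using hg(2) by eventually_elim simp
    define \<theta> where "\<theta> = (\<lambda>x. \<psi> x powr q)"
    define D\<theta> where "D\<theta> = (\<lambda>x. (q * pw (\<psi> x) (q - 1)) *\<^sub>R D\<psi> x)"
    define V where "V = (\<lambda>x. pw (norm (Du x)) (p - 2))"
    have C\<theta>: "C1_grad \<theta> D\<theta>" unfolding \<theta>_def D\<theta>_def by (rule C1_powr_nonneg[OF C\<psi> nn qge])
    have Z: "\<And>x. \<psi> x = 0 \<Longrightarrow> \<theta> x = 0 \<and> D\<theta> x = 0 \<and> D\<psi> x = 0"
      using grad_zero_at_min[OF C\<psi> nn] qge by (auto simp: \<theta>_def D\<theta>_def)
    have \<theta>nn: "\<And>x. \<theta> x \<ge> 0" by (simp add: \<theta>_def)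
    define \<phi> where "\<phi> = (\<lambda>x. u x powr \<gamma> * \<theta> x)"
    define D\<phi> where "D\<phi> = (\<lambda>x. u x powr \<gamma> *\<^sub>R D\<theta> x + \<theta> x *\<^sub>R ((\<gamma> * u x powr (\<gamma> - 1)) *\<^sub>R Du x))"
    have C\<phi>: "C1_grad \<phi> D\<phi>" unfolding \<phi>_def D\<phi>_def
      by (rule C1_mult[OF C1_powr_pos[OF hu(1) upos] C\<theta>])
    have C\<phi>c: "C1c_grad \<phi> D\<phi>" by (rule C1c_of[OF C\<phi> conjunct1[OF H]]) (simp add: \<phi>_def Z)
    define \<zeta> where "\<zeta> = (\<lambda>x. u x powr (e + 1) * (\<theta> x * \<theta> x))"
    define D\<zeta> where "D\<zeta> = (\<lambda>x. u x powr (e + 1) *\<^sub>R (\<theta> x *\<^sub>R D\<theta> x + \<theta> x *\<^sub>R D\<theta> x) + (\<theta> x * \<theta> x) *\<^sub>R (((e + 1) * u x powr (e + 1 - 1)) *\<^sub>R Du x))"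
    have C\<zeta>: "C1_grad \<zeta> D\<zeta>" unfolding \<zeta>_def D\<zeta>_def
      by (rule C1_mult[OF C1_powr_pos[OF hu(1) upos] C1_mult[OF C\<theta> C\<theta>]])
    have C\<zeta>c: "C1c_grad \<zeta> D\<zeta>" by (rule C1c_of[OF C\<zeta> conjunct1[OF H]]) (simp add: \<zeta>_def Z)
    have cu: "continuous_on UNIV u" using hu(1) by (rule C1_cont)
    have cDu: "continuous_on UNIV Du" using hu(1) by (simp add: C1_grad_def)
    have c\<psi>: "continuous_on UNIV \<psi>" using C\<psi> by (rule C1_cont)
    have cD\<psi>: "continuous_on UNIV D\<psi>" using C\<psi> by (simp add: C1_grad_def)
    have c\<theta>: "continuous_on UNIV \<theta>" using C\<theta> by (rule C1_cont)
    have cD\<theta>: "continuous_on UNIV D\<theta>" using C\<theta> by (simp add: C1_grad_def)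
    have cV: "continuous_on UNIV V" unfolding V_def
      using hp by (intro cont_pw continuous_on_norm cDu) auto
    have cup: "\<And>a. continuous_on UNIV (\<lambda>x. u x powr a)"
      using upos by (intro continuous_on_powr cu continuous_on_const) (metis less_irrefl)
    have cex: "continuous_on UNIV (\<lambda>x. exp (1 / u x))"
      using upos by (intro continuous_intros cu) (metis less_irrefl)
    have cnp: "continuous_on UNIV (\<lambda>x. norm (D\<psi> x) powr p)"
      using hp by (intro continuous_on_powr' continuous_on_norm cD\<psi> continuous_on_const) auto
    have intw: "\<And>f. continuous_on UNIV f \<Longrightarrow> (\<And>x. \<psi> x = 0 \<Longrightarrow> f x = 0) \<Longrightarrow> integrable lebesgue (\<lambda>x. w x * f x)"
    proof -
      fix f :: "real^'n \<Rightarrow> real" assume f: "continuous_on UNIV f" and z: "\<And>x. \<psi> x = 0 \<Longrightarrow> f x = 0"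
      show "integrable lebesgue (\<lambda>x. w x * f x)"
      proof (rule integrable_w_cont[OF hw(1) f cK])
        fix x assume "x \<notin> closure {x. \<psi> x \<noteq> 0}"
        moreover have "x \<in> {x. \<psi> x \<noteq> 0} \<Longrightarrow> x \<in> closure {x. \<psi> x \<noteq> 0}"
          by (rule subsetD[OF closure_subset])
        ultimately have "\<psi> x = 0" by auto
        thus "f x = 0" by (rule z)
      qed
    qed
    have intg: "\<And>f. continuous_on UNIV f \<Longrightarrow> (\<And>x. \<psi> x = 0 \<Longrightarrow> f x = 0) \<Longrightarrow> integrable lebesgue (\<lambda>x. g x * f x)"
    proof -
      fix f :: "real^'n \<Rightarrow> real" assume f: "continuous_on UNIV f" and z: "\<And>x. \<psi> x = 0 \<Longrightarrow> f x = 0"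
      show "integrable lebesgue (\<lambda>x. g x * f x)"
      proof (rule integrable_w_cont[OF hg(1) f cK])
        fix x assume "x \<notin> closure {x. \<psi> x \<noteq> 0}"
        moreover have "x \<in> {x. \<psi> x \<noteq> 0} \<Longrightarrow> x \<in> closure {x. \<psi> x \<noteq> 0}"
          by (rule subsetD[OF closure_subset])
        ultimately have "\<psi> x = 0" by auto
        thus "f x = 0" by (rule z)
      qed
    qed
    define a1 where "a1 = (\<lambda>x. w x * (V x * (norm (Du x))\<^sup>2 * u x powr e * (\<theta> x)\<^sup>2))"
    define b1 where "b1 = (\<lambda>x. w x * (V x * u x powr (e + 1) * \<theta> x * (Du x \<bullet> D\<theta> x)))"
    define c1 where "c1 = (\<lambda>x. w x * (V x * u x powr (e + 2) * (norm (D\<theta> x))\<^sup>2))"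
    define Y where "Y = (\<lambda>x. w x * u x powr (- 2 * \<beta>) * norm (D\<psi> x) powr p)"
    define e1 where "e1 = (\<lambda>x. g x * (exp (1 / u x) * u x powr (e + 1) * (\<theta> x)\<^sup>2))"
    define e2 where "e2 = (\<lambda>x. g x * (exp (1 / u x) * u x powr e * (\<theta> x)\<^sup>2))"
    have ia1: "integrable lebesgue a1" unfolding a1_def
      by (rule intw) (auto intro!: continuous_intros cV cDu cup c\<theta> simp: Z)
    have ib1: "integrable lebesgue b1" unfolding b1_def
      by (rule intw) (auto intro!: continuous_intros cV cDu cup c\<theta> cD\<theta> simp: Z)
    have ic1: "integrable lebesgue c1" unfolding c1_def
      by (rule intw) (auto intro!: continuous_intros cV cup cD\<theta> simp: Z)
    have iY: "integrable lebesgue Y"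
    proof -
      have "integrable lebesgue (\<lambda>x. w x * (u x powr (- 2 * \<beta>) * norm (D\<psi> x) powr p))"
        by (rule intw) (auto intro!: continuous_intros cup cnp simp: Z)
      thus ?thesis by (simp add: Y_def mult.assoc)
    qed
    have ie1: "integrable lebesgue e1" unfolding e1_def
      by (rule intg) (auto intro!: continuous_intros cex cup c\<theta> simp: Z)
    have ie2: "integrable lebesgue e2" unfolding e2_def
      by (rule intg) (auto intro!: continuous_intros cex cup c\<theta> simp: Z)
    define A where "A = integral\<^sup>L lebesgue a1"
    define B where "B = integral\<^sup>L lebesgue b1"
    define C' where "C' = integral\<^sup>L lebesgue c1"
    define C where "C = integral\<^sup>L lebesgue Y"
    define E1 where "E1 = integral\<^sup>L lebesgue e1"
    define E2 where "E2 = integral\<^sup>L lebesgue e2"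
    have Vnn: "\<And>x. V x \<ge> 0" by (simp add: V_def pw_def)
    have pe: "\<And>x. u x powr \<gamma> * u x powr \<gamma> = u x powr (e + 2)"
             "\<And>x. u x powr \<gamma> * u x powr (\<gamma> - 1) = u x powr (e + 1)"
             "\<And>x. u x powr (\<gamma> - 1) * u x powr (\<gamma> - 1) = u x powr e"
      by (simp_all only: powr_add[symmetric] ge)
    have W1: "\<And>x. w x * pw (norm (Du x)) (p - 2) * (Du x \<bullet> D\<zeta> x) = (e + 1) * a1 x + 2 * b1 x"
    proof -
      fix x
      have "Du x \<bullet> D\<zeta> x = u x powr (e + 1) * (\<theta> x * (Du x \<bullet> D\<theta> x) + \<theta> x * (Du x \<bullet> D\<theta> x)) + (\<theta> x * \<theta> x) * (((e + 1) * u x powr (e + 1 - 1)) * (norm (Du x))\<^sup>2)"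
        by (simp only: D\<zeta>_def inner_add_right inner_scaleR_right dot_square_norm)
      thus "w x * pw (norm (Du x)) (p - 2) * (Du x \<bullet> D\<zeta> x) = (e + 1) * a1 x + 2 * b1 x"
        by (simp add: a1_def b1_def V_def algebra_simps power2_eq_square)
    qed
    have W2: "\<And>x. g x * fE (u x) * \<zeta> x = - e1 x"
      by (simp add: fE_def e1_def \<zeta>_def power2_eq_square)
    have IW: "(e + 1) * A + 2 * B = - E1"
    proof -
      have "(\<integral>x. w x * pw (norm (Du x)) (p - 2) * (Du x \<bullet> D\<zeta> x) \<partial>lebesgue) = (\<integral>x. g x * fE (u x) * \<zeta> x \<partial>lebesgue)"
        using hsol C\<zeta>c by (simp add: weak_solution_def)
      hence "(\<integral>x. (e + 1) * a1 x + 2 * b1 x \<partial>lebesgue) = (\<integral>x. - e1 x \<partial>lebesgue)"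
        by (simp only: W1 W2)
      thus ?thesis using ia1 ib1 by (simp add: A_def B_def E1_def)
    qed
    have S1: "\<And>x. w x * pw (norm (Du x)) (p - 2) * (norm (D\<phi> x))\<^sup>2 = \<gamma>\<^sup>2 * a1 x + 2 * \<gamma> * b1 x + c1 x"
    proof -
      fix x
      have "(norm (D\<phi> x))\<^sup>2 = (norm (u x powr \<gamma> *\<^sub>R D\<theta> x + (\<theta> x * (\<gamma> * u x powr (\<gamma> - 1))) *\<^sub>R Du x))\<^sup>2"
        by (simp add: D\<phi>_def)
      also have "\<dots> = (u x powr \<gamma>)\<^sup>2 * (norm (D\<theta> x))\<^sup>2 + 2 * (u x powr \<gamma>) * (\<theta> x * (\<gamma> * u x powr (\<gamma> - 1))) * (D\<theta> x \<bullet> Du x)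
          + (\<theta> x * (\<gamma> * u x powr (\<gamma> - 1)))\<^sup>2 * (norm (Du x))\<^sup>2"
        by (rule norm_comb_sq)
      also have "\<dots> = u x powr (e + 2) * (norm (D\<theta> x))\<^sup>2 + 2 * \<gamma> * \<theta> x * (u x powr \<gamma> * u x powr (\<gamma> - 1)) * (Du x \<bullet> D\<theta> x)
          + \<gamma>\<^sup>2 * (\<theta> x)\<^sup>2 * (u x powr (\<gamma> - 1) * u x powr (\<gamma> - 1)) * (norm (Du x))\<^sup>2"
        by (simp only: pe(1)[symmetric] power2_eq_square inner_commute) (simp add: algebra_simps)
      also have "\<dots> = u x powr (e + 2) * (norm (D\<theta> x))\<^sup>2 + 2 * \<gamma> * \<theta> x * u x powr (e + 1) * (Du x \<bullet> D\<theta> x)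
          + \<gamma>\<^sup>2 * (\<theta> x)\<^sup>2 * u x powr e * (norm (Du x))\<^sup>2"
        by (simp only: pe)
      finally show "w x * pw (norm (Du x)) (p - 2) * (norm (D\<phi> x))\<^sup>2 = \<gamma>\<^sup>2 * a1 x + 2 * \<gamma> * b1 x + c1 x"
        by (simp add: a1_def b1_def c1_def V_def algebra_simps)
    qed
    have S2: "\<And>x. g x * fE' (u x) * (\<phi> x)\<^sup>2 = e2 x"
    proof -
      fix x
      have u2: "u x powr (e + 2) = u x powr e * (u x)\<^sup>2"
        using upos[rule_format, of x] by (simp add: powr_add powr_numeral)
      have "(\<phi> x)\<^sup>2 = u x powr (e + 2) * (\<theta> x)\<^sup>2"
        by (simp add: \<phi>_def power2_eq_square pe(1)[symmetric] algebra_simps)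
      thus "g x * fE' (u x) * (\<phi> x)\<^sup>2 = e2 x"
        using upos[rule_format, of x] by (simp add: fE'_def e2_def u2 field_simps)
    qed
    have iL: "integrable lebesgue (\<lambda>x. w x * pw (norm (Du x)) (p - 2) * (norm (D\<phi> x))\<^sup>2)"
      unfolding S1 using ia1 ib1 ic1 by simp
    have IS: "E2 \<le> (p - 1) * (\<gamma>\<^sup>2 * A + 2 * \<gamma> * B + C')"
    proof -
      have st: "(\<integral>x. w x * pw (norm (Du x)) (p - 2) * (norm (D\<phi> x))\<^sup>2 \<partial>lebesgue)
        + (p - 2) * (\<integral>x. (if Du x = 0 then 0
                            else w x * norm (Du x) powr (p - 4) * (Du x \<bullet> D\<phi> x)\<^sup>2) \<partial>lebesgue)
        - (\<integral>x. g x * fE' (u x) * (\<phi> x)\<^sup>2 \<partial>lebesgue) \<ge> 0"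
        using hstab C\<phi>c by (simp add: stable_def)
      have mb: "(p - 2) * (\<integral>x. (if Du x = 0 then 0
                            else w x * norm (Du x) powr (p - 4) * (Du x \<bullet> D\<phi> x)\<^sup>2) \<partial>lebesgue)
          \<le> (p - 2) * (\<integral>x. w x * pw (norm (Du x)) (p - 2) * (norm (D\<phi> x))\<^sup>2 \<partial>lebesgue)"
        by (rule mid_bound[OF hp wnn iL])
      have "(\<integral>x. w x * pw (norm (Du x)) (p - 2) * (norm (D\<phi> x))\<^sup>2 \<partial>lebesgue) = \<gamma>\<^sup>2 * A + 2 * \<gamma> * B + C'"
        unfolding S1 using ia1 ib1 ic1 by (simp add: A_def B_def C'_def)
      moreover have "(\<integral>x. g x * fE' (u x) * (\<phi> x)\<^sup>2 \<partial>lebesgue) = E2" by (simp add: S2 E2_def)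
      ultimately show ?thesis using st mb by (simp add: algebra_simps)
    qed
    have IE: "E1 \<le> M * E2"
    proof -
      have "E1 \<le> (\<integral>x. M * e2 x \<partial>lebesgue)" unfolding E1_def
      proof (rule integral_mono_AE[OF ie1])
        show "integrable lebesgue (\<lambda>x. M * e2 x)" using ie2 by simp
        show "AE x in lebesgue. e1 x \<le> M * e2 x" using gnn
        proof eventually_elim
          case (elim x)
          have "u x powr (e + 1) = u x powr e * u x" using upos[rule_format, of x] by (simp add: powr_add)
          also have "\<dots> \<le> u x powr e * M" using uM by (intro mult_left_mono) auto
          finally have "exp (1 / u x) * u x powr (e + 1) * (\<theta> x)\<^sup>2 \<le> exp (1 / u x) * (u x powr e * M) * (\<theta> x)\<^sup>2"
            by (intro mult_right_mono mult_left_mono) auto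
          hence "g x * (exp (1 / u x) * u x powr (e + 1) * (\<theta> x)\<^sup>2) \<le> g x * (exp (1 / u x) * (u x powr e * M) * (\<theta> x)\<^sup>2)"
            using elim by (intro mult_left_mono) auto
          thus ?case by (simp add: e1_def e2_def algebra_simps)
        qed
      qed
      thus ?thesis by (simp add: E2_def)
    qed
    have nD\<theta>: "\<And>x. norm (D\<theta> x) = (p/2) * pw (\<psi> x) (p/2 - 1) * norm (D\<psi> x)"
      using hp by (simp add: D\<theta>_def q_def pw_def abs_mult)
    have Yeq: "\<And>x. Y x = w x * (u x powr (e + p) * norm (D\<psi> x) powr p)"
      by (simp add: Y_def ge(4))
    have PB1': "AE x in lebesgue. \<bar>b1 x\<bar> \<le> q * (\<eta> * a1 x + \<eta> powr (1 - p) * Y x)"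
      using wnn
    proof eventually_elim
      case (elim x)
      have "\<bar>Du x \<bullet> D\<theta> x\<bar> \<le> norm (Du x) * ((p/2) * pw (\<psi> x) (p/2 - 1) * norm (D\<psi> x))"
        using Cauchy_Schwarz_ineq2[of "Du x" "D\<theta> x"] by (simp add: nD\<theta>)
      from PB1[where t="\<psi> x" and U="u x" and e=e, OF elim norm_ge_zero _ norm_ge_zero _ hp \<eta>pos this] nn upos
      show ?case by (simp add: b1_def a1_def Yeq V_def \<theta>_def q_def)
    qed
    have PB2': "AE x in lebesgue. c1 x \<le> q\<^sup>2 * (\<eta>\<^sup>2 * a1 x + \<eta> powr (2 - p) * Y x)"
      using wnn
    proof eventually_elim
      case (elim x)
      from PB2[where s="norm (Du x)" and r="norm (D\<psi> x)" and t="\<psi> x" and U="u x" and e=e, OF elim norm_ge_zero _ norm_ge_zero _ hp \<eta>pos] nn upos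
      show ?case by (simp add: c1_def a1_def Yeq V_def \<theta>_def q_def nD\<theta>)
    qed
    have IB: "\<bar>B\<bar> \<le> q * (\<eta> * A + \<eta> powr (1 - p) * C)"
    proof -
      have ih: "integrable lebesgue (\<lambda>x. q * (\<eta> * a1 x + \<eta> powr (1 - p) * Y x))" using ia1 iY by simp
      have ihv: "(\<integral>x. q * (\<eta> * a1 x + \<eta> powr (1 - p) * Y x) \<partial>lebesgue) = q * (\<eta> * A + \<eta> powr (1 - p) * C)"
        using ia1 iY by (simp add: A_def C_def)
      have "B \<le> (\<integral>x. q * (\<eta> * a1 x + \<eta> powr (1 - p) * Y x) \<partial>lebesgue)" unfolding B_def
        by (rule integral_mono_AE[OF ib1 ih]) (use PB1' in \<open>eventually_elim, simp\<close>)
      moreover have "(\<integral>x. - b1 x \<partial>lebesgue) \<le> (\<integral>x. q * (\<eta> * a1 x + \<eta> powr (1 - p) * Y x) \<partial>lebesgue)"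
      proof (rule integral_mono_AE[OF _ ih])
        show "integrable lebesgue (\<lambda>x. - b1 x)" using ib1 by simp
        show "AE x in lebesgue. - b1 x \<le> q * (\<eta> * a1 x + \<eta> powr (1 - p) * Y x)"
          using PB1' by eventually_elim simp
      qed
      moreover have "(\<integral>x. - b1 x \<partial>lebesgue) = - B" by (simp add: B_def)
      ultimately show ?thesis using ihv by (simp only: abs_le_iff)
    qed
    have IC': "C' \<le> q\<^sup>2 * (\<eta>\<^sup>2 * A + \<eta> powr (2 - p) * C)"
    proof -
      have ih: "integrable lebesgue (\<lambda>x. q\<^sup>2 * (\<eta>\<^sup>2 * a1 x + \<eta> powr (2 - p) * Y x))" using ia1 iY by simp
      have "C' \<le> (\<integral>x. q\<^sup>2 * (\<eta>\<^sup>2 * a1 x + \<eta> powr (2 - p) * Y x) \<partial>lebesgue)" unfolding C'_def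
        by (rule integral_mono_AE[OF ic1 ih PB2'])
      thus ?thesis using ia1 iY by (simp add: A_def C_def)
    qed
    have Ann: "A \<ge> 0" unfolding A_def
      by (rule integral_nonneg_AE) (use wnn in \<open>eventually_elim, simp add: a1_def Vnn\<close>)
    have Cnn: "C \<ge> 0" unfolding C_def
      by (rule integral_nonneg_AE) (use wnn in \<open>eventually_elim, simp add: Y_def\<close>)
    have LE2: "(\<integral>x. g x * u x powr (- 2 * \<beta> - p) * \<psi> x powr p \<partial>lebesgue) \<le> E2"
      unfolding E2_def
    proof (rule integral_mono_AE'[OF ie2])
      show "AE x in lebesgue. g x * u x powr (- 2 * \<beta> - p) * \<psi> x powr p \<le> e2 x" using gnn
      proof eventually_elim
        case (elim x)
        have th: "(\<theta> x)\<^sup>2 = \<psi> x powr p"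
        proof (cases "\<psi> x = 0")
          case False
          hence "\<psi> x > 0" using nn by (metis order_le_less)
          thus ?thesis by (simp add: \<theta>_def sq_powr q_def)
        qed (simp add: \<theta>_def)
        have ex1: "1 \<le> exp (1 / u x)" using upos[rule_format, of x] by simp
        have X0: "0 \<le> u x powr e * \<psi> x powr p" by simp
        have "u x powr e * \<psi> x powr p \<le> exp (1 / u x) * (u x powr e * \<psi> x powr p)"
          using mult_right_mono[OF ex1 X0] by simp
        hence "g x * (u x powr e * \<psi> x powr p) \<le> g x * (exp (1 / u x) * (u x powr e * \<psi> x powr p))"
          using elim by (intro mult_left_mono) auto
        thus ?case by (simp add: e2_def th e_def algebra_simps)
      qed
      show "AE x in lebesgue. 0 \<le> e2 x" using gnn by eventually_elim (simp add: e2_def)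
    qed
    have mA: "m * A = E1 + 2 * B" using IW by (simp add: m_def e_def algebra_simps)
    have "m * A \<le> M * E2 + 2 * B" using mA IE by simp
    also have "\<dots> \<le> M * ((p - 1) * (\<gamma>\<^sup>2 * A + 2 * \<gamma> * B + C')) + 2 * B"
      using IS hM by (simp add: mult_left_mono)
    finally have "\<delta> * A \<le> (2 + 2 * L * \<gamma>) * B + L * C'"
      by (simp add: \<delta>_def L_def algebra_simps)
    also have "\<dots> \<le> \<bar>2 + 2 * L * \<gamma>\<bar> * \<bar>B\<bar> + L * C'"
      by (simp add: abs_mult[symmetric])
    also have "\<dots> \<le> \<bar>2 + 2 * L * \<gamma>\<bar> * (q * (\<eta> * A + \<eta> powr (1 - p) * C)) + L * (q\<^sup>2 * (\<eta>\<^sup>2 * A + \<eta> powr (2 - p) * C))"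
      using IB IC' Lnn by (intro add_mono mult_left_mono) auto
    also have "\<dots> = (k1 * \<eta> + k2 * \<eta>\<^sup>2) * A + K0 * C"
      by (simp add: k1_def k2_def K0_def algebra_simps)
    also have "\<dots> \<le> (\<delta> / 2) * A + K0 * C"
      using mult_right_mono[OF coef Ann] by simp
    finally have AKA: "A \<le> KA * C"
      using \<delta>pos by (simp add: KA_def field_simps)
    have E2B: "E2 \<le> (p - 1) * (\<gamma>\<^sup>2 * A + 2 * \<bar>\<gamma>\<bar> * \<bar>B\<bar> + C')"
    proof -
      have "2 * \<gamma> * B \<le> 2 * \<bar>\<gamma>\<bar> * \<bar>B\<bar>" by (simp add: abs_mult[symmetric])
      thus ?thesis using IS hp by (smt (verit) mult_left_mono)
    qed
    have qnn: "q \<ge> 0" using qge by simp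
    have "E2 \<le> (p - 1) * (\<gamma>\<^sup>2 * A + 2 * \<bar>\<gamma>\<bar> * (q * (\<eta> * A + \<eta> powr (1 - p) * C)) + q\<^sup>2 * (\<eta>\<^sup>2 * A + \<eta> powr (2 - p) * C))"
    proof -
      have "\<gamma>\<^sup>2 * A + 2 * \<bar>\<gamma>\<bar> * \<bar>B\<bar> + C' \<le> \<gamma>\<^sup>2 * A + 2 * \<bar>\<gamma>\<bar> * (q * (\<eta> * A + \<eta> powr (1 - p) * C)) + q\<^sup>2 * (\<eta>\<^sup>2 * A + \<eta> powr (2 - p) * C)"
        by (intro add_mono order_refl mult_left_mono IB IC') auto
      thus ?thesis using E2B hp by (smt (verit) mult_left_mono)
    qed
    also have "\<dots> \<le> (p - 1) * (\<gamma>\<^sup>2 * (KA * C) + 2 * \<bar>\<gamma>\<bar> * (q * (\<eta> * (KA * C) + \<eta> powr (1 - p) * C)) + q\<^sup>2 * (\<eta>\<^sup>2 * (KA * C) + \<eta> powr (2 - p) * C))"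
      using hp qnn \<eta>pos by (intro mult_left_mono add_mono order_refl AKA) auto
    also have "\<dots> = K * C" by (simp add: K_def algebra_simps)
    also have "\<dots> \<le> max K 1 * C" using Cnn by (intro mult_right_mono) auto
    finally have "E2 \<le> max K 1 * C" .
    show "(\<integral>x. g x * u x powr (- 2 * \<beta> - p) * \<psi> x powr p \<partial>lebesgue)
              \<le> max K 1 * (\<integral>x. w x * u x powr (- 2 * \<beta>) * norm (D\<psi> x) powr p \<partial>lebesgue)"
      using LE2 \<open>E2 \<le> max K 1 * C\<close> by (simp add: C_def Y_def)
  qed simp
qed


end
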